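(* Let $(\mathcal{N},d)$ be a complete global Alexandrov NPC space and $T:\mathcal{N}\to\mathcal{N}$ a nonexpansive distance convex mapping. Then, for any $p\in\mathcal{N}$ whose orbit $\{p,Tp,T^2p,\ldots\}$ is bounded, and any $q\in\mathcal{N}$, the following are equivalent: (i) $Tq=q$ and $q\in\overline{co}\{p,Tp,T^2p,\ldots\}$; (ii) $q=\lim_{n\to\infty} m_n(p)$ (convergence in the metric $d$); (iii) $q$ is the weak limit of the sequence $(m_n(p))$; (iv) $q$ is a weak cluster point of the sequence $(m_n(p))$.
   Context: A metric space $(\mathcal{N},d)$ is a geodesic length space if any two points $p,q$ are joined by a rectifiable curve $\gamma:[0,1]\to\mathcal{N}$ with $\gamma(0)=p$, $\gamma(1)=q$ of length $d(p,q)$ (a geodesic). It is a global Alexandrov NPC space if for all $q\in\mathcal{N}$, every geodesic $\gamma:[0,1]\to\mathcal{N}$ and $0\le t\le 1$: $d^2(q,\gamma(t))\le (1-t)d^2(q,\gamma(0))+t d^2(q,\gamma(1))-t(1-t)l(\gamma)^2$, where $l(\gamma)$ is the length of $\gamma$. In such spaces geodesics between two points are unique. A subset is convex if any two of its points are joined by a geodesic contained in it; $co(S)$ is the smallest convex set containing $S$, and $\overline{co}(S)$ its closure. $T$ is nonexpansive if $d(Tp,Tq)\le d(p,q)$ for all $p,q$. For $r,p\in\mathcal{N}$ and $n\ge1$ let $F_n(r,p)=\frac1n\sum_{i=0}^{n-1}d^2(r,T^ip)$, and let $m_n(p)$ be the unique minimizer of $F_n(\cdot,p)$ (it exists in a complete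 global Alexandrov NPC space). $T$ is distance convex if for all $n\in\mathbb{N}$ and $q\in\mathcal{N}$ the function $r\mapsto d^2(m_n(r),q)$ is convex on $\mathcal{N}$, i.e. its composition with every geodesic $[0,1]\to\mathcal{N}$ is convex. For $x\in\mathcal{N}$ and a geodesic arc $\gamma$, the projection $\pi(x,\gamma)$ is the unique point of $\gamma$ closest to $x$. A sequence $(p_n)$ converges weakly to $q$ if for every geodesic arc $\gamma$ through $q$, $\pi(p_n,\gamma)\to q$. A point $q$ is a weak cluster point of $(p_n)$ if for every neighborhood $U$ of $q$ there are infinitely many $n$ such that $\pi(p_n,\gamma)\in U$ for every geodesic arc $\gamma$ through $q$. *)

theory Defs
  imports "HOL-Analysis.Analysis"
begin

text \<open>Geodesics, parametrised on [0,1] proportionally to arc length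
  (constant speed), so that the length of the curve equals dist (g 0) (g 1).\<close>
definition geodesic :: "(real \<Rightarrow> 'a::metric_space) \<Rightarrow> bool" where
  "geodesic g \<longleftrightarrow>
     (\<forall>s\<in>{0..1}. \<forall>t\<in>{0..1}. dist (g s) (g t) = \<bar>s - t\<bar> * dist (g 0) (g 1))"

definition geodesic_length_space :: "'a::metric_space itself \<Rightarrow> bool" where
  "geodesic_length_space _ \<longleftrightarrow>
     (\<forall>p q::'a. \<exists>g. geodesic g \<and> g 0 = p \<and> g 1 = q)"

definition NPC_space :: "'a::metric_space itself \<Rightarrow> bool" where
  "NPC_space X \<longleftrightarrow> geodesic_length_space X \<and>
     (\<forall>(q::'a) g t. geodesic g \<and> t \<in> {0..1} \<longrightarrow>
        (dist q (g t))\<^sup>2 \<le> (1 - t) * (dist q (g 0))\<^sup>2 + t * (dist q (g 1))\<^sup>2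
                            - t * (1 - t) * (dist (g 0) (g 1))\<^sup>2)"

definition geo_convex :: "'a::metric_space set \<Rightarrow> bool" where
  "geo_convex S \<longleftrightarrow>
     (\<forall>p\<in>S. \<forall>q\<in>S. \<exists>g. geodesic g \<and> g 0 = p \<and> g 1 = q \<and> g ` {0..1} \<subseteq> S)"

definition geo_co :: "'a::metric_space set \<Rightarrow> 'a set" where
  "geo_co S = \<Inter>{C. geo_convex C \<and> S \<subseteq> C}"

definition nonexpansive :: "('a::metric_space \<Rightarrow> 'a) \<Rightarrow> bool" where
  "nonexpansive T \<longleftrightarrow> (\<forall>p q. dist (T p) (T q) \<le> dist p q)"

definition Fn :: "('a::metric_space \<Rightarrow> 'a) \<Rightarrow> nat \<Rightarrow> 'a \<Rightarrow> 'a \<Rightarrow> real" where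
  "Fn T n r p = (1 / real n) * (\<Sum>i<n. (dist r ((T ^^ i) p))\<^sup>2)"

definition mn :: "('a::metric_space \<Rightarrow> 'a) \<Rightarrow> nat \<Rightarrow> 'a \<Rightarrow> 'a" where
  "mn T n p = (THE r. \<forall>r'. Fn T n r p \<le> Fn T n r' p)"

definition distance_convex :: "('a::metric_space \<Rightarrow> 'a) \<Rightarrow> bool" where
  "distance_convex T \<longleftrightarrow>
     (\<forall>n\<ge>1. \<forall>q g. geodesic g \<longrightarrow> convex_on {0..1} (\<lambda>t. (dist (mn T n (g t)) q)\<^sup>2))"

definition geo_proj :: "'a::metric_space \<Rightarrow> (real \<Rightarrow> 'a) \<Rightarrow> 'a" where
  "geo_proj x g = (THE y. y \<in> g ` {0..1} \<and> (\<forall>z\<in>g ` {0..1}. dist x y \<le> dist x z))"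

definition weak_limit :: "(nat \<Rightarrow> 'a::metric_space) \<Rightarrow> 'a \<Rightarrow> bool" where
  "weak_limit p q \<longleftrightarrow>
     (\<forall>g. geodesic g \<and> q \<in> g ` {0..1} \<longrightarrow> (\<lambda>n. geo_proj (p n) g) \<longlonglongrightarrow> q)"

definition weak_cluster_point :: "(nat \<Rightarrow> 'a::metric_space) \<Rightarrow> 'a \<Rightarrow> bool" where
  "weak_cluster_point p q \<longleftrightarrow>
     (\<forall>U. open U \<and> q \<in> U \<longrightarrow>
        infinite {n. \<forall>g. geodesic g \<and> q \<in> g ` {0..1} \<longrightarrow> geo_proj (p n) g \<in> U})"

end

theory Submission
  imports Defs
begin


lemma real_lim_t:
  fixes A B :: real
  assumes "\<And>t. 0 < t \<Longrightarrow> t \<le> 1 \<Longrightarrow> (1 - t) * B \<le> A"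
  shows "B \<le> A"
proof (rule ccontr)
  assume "\<not> B \<le> A"
  hence AB: "A < B" by simp
  have "0 \<le> A" using assms[of 1] by simp
  hence Bp: "B > 0" using AB by simp
  define t where "t = (B - A) / (2 * B)"
  have t0: "0 < t" using AB Bp by (simp add: t_def)
  have t1: "t \<le> 1" using AB Bp \<open>0 \<le> A\<close> by (simp add: t_def field_simps)
  have "(1 - t) * B = (A + B) / 2" using Bp by (simp add: t_def field_simps)
  with assms[OF t0 t1] AB show False by simp
qed

lemma geodesic_dist:
  assumes "geodesic g" "s \<in> {0..1}" "t \<in> {0..1}"
  shows "dist (g s) (g t) = \<bar>s - t\<bar> * dist (g 0) (g 1)"
  using assms unfolding geodesic_def by blast

lemma geodesic_d0:
  assumes "geodesic g" "t \<in> {0..1}"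
  shows "dist (g 0) (g t) = t * dist (g 0) (g 1)"
  using geodesic_dist[OF assms(1) _ assms(2), of 0] assms(2) by simp

lemma geodesic_d1:
  assumes "geodesic g" "t \<in> {0..1}"
  shows "dist (g t) (g 1) = (1 - t) * dist (g 0) (g 1)"
  using geodesic_dist[OF assms(1) assms(2), of 1] assms(2) by simp

lemma NPC_geodesic_exists:
  assumes "NPC_space TYPE('a::metric_space)"
  shows "\<exists>g. geodesic g \<and> g 0 = (a::'a) \<and> g 1 = b"
  using assms unfolding NPC_space_def geodesic_length_space_def by blast

lemma NPC_ineq:
  assumes "NPC_space TYPE('a::metric_space)" "geodesic (g :: real \<Rightarrow> 'a)" "t \<in> {0..1}"
  shows "(dist q (g t))\<^sup>2 \<le> (1 - t) * (dist q (g 0))\<^sup>2 + t * (dist q (g 1))\<^sup>2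
                            - t * (1 - t) * (dist (g 0) (g 1))\<^sup>2"
  using assms unfolding NPC_space_def by blast

lemma geodesic_unique:
  assumes "NPC_space TYPE('a::metric_space)" "geodesic (g :: real \<Rightarrow> 'a)" "geodesic h"
    "g 0 = h 0" "g 1 = h 1" "t \<in> {0..1}"
  shows "g t = h t"
proof -
  let ?L = "dist (g 0) (g 1)"
  have "(dist (h t) (g t))\<^sup>2 \<le> (1 - t) * (dist (h t) (g 0))\<^sup>2 + t * (dist (h t) (g 1))\<^sup>2
                            - t * (1 - t) * ?L\<^sup>2"
    using NPC_ineq[OF assms(1,2,6)] .
  also have "dist (h t) (g 0) = t * ?L"
    using geodesic_d0[OF assms(3,6)] assms(4,5) by (simp add: dist_commute)
  also have "dist (h t) (g 1) = (1 - t) * ?L"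
    using geodesic_d1[OF assms(3,6)] assms(4,5) by simp
  finally have "(dist (h t) (g t))\<^sup>2 \<le> 0" by (simp add: algebra_simps power2_eq_square)
  thus ?thesis by simp
qed

lemma subgeodesic:
  assumes "geodesic g" "u \<in> {0..1}" "s \<in> {0..1}"
  shows "geodesic (\<lambda>t. g (u + t * (s - u)))"
proof -
  have mem: "u + t * (s - u) \<in> {0..1}" if "t \<in> {0..1}" for t
  proof -
    have "u + t * (s - u) = (1 - t) * u + t * s" by (simp add: algebra_simps)
    moreover have "0 \<le> (1 - t) * u + t * s" using that assms by auto
    moreover have "(1 - t) * u + t * s \<le> (1 - t) * 1 + t * 1"
      using that assms by (intro add_mono mult_left_mono) auto
    ultimately show ?thesis by simp
  qed
  show ?thesis unfolding geodesic_def
  proof (intro ballI)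
    fix a b :: real assume a: "a \<in> {0..1}" and b: "b \<in> {0..1}"
    have e: "(u + a * (s - u)) - (u + b * (s - u)) = (a - b) * (s - u)" by algebra
    have "dist (g (u + a * (s - u))) (g (u + b * (s - u))) = \<bar>(a - b) * (s - u)\<bar> * dist (g 0) (g 1)"
      using geodesic_dist[OF assms(1) mem[OF a] mem[OF b]] by (simp only: e)
    hence "dist (g (u + a * (s - u))) (g (u + b * (s - u))) = \<bar>a - b\<bar> * (\<bar>s - u\<bar> * dist (g 0) (g 1))"
      by (simp add: abs_mult)
    moreover have "dist (g (u + 0 * (s - u))) (g (u + 1 * (s - u))) = \<bar>s - u\<bar> * dist (g 0) (g 1)"
      using geodesic_dist[OF assms(1) assms(2) assms(3)] by (simp add: abs_minus_commute)
    ultimately show "dist (g (u + a * (s - u))) (g (u + b * (s - u))) =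
         \<bar>a - b\<bar> * dist (g (u + 0 * (s - u))) (g (u + 1 * (s - u)))" by simp
  qed
qed

lemma geodesic_cont:
  assumes "geodesic g"
  shows "continuous_on {0..1} g"
  unfolding continuous_on_iff
proof (intro ballI allI impI)
  fix x e :: real assume x: "x \<in> {0..1}" and e: "0 < e"
  let ?L = "dist (g 0) (g 1)"
  show "\<exists>d>0. \<forall>x'\<in>{0..1}. dist x' x < d \<longrightarrow> dist (g x') (g x) < e"
  proof (intro exI[of _ "e / (?L + 1)"] conjI ballI impI)
    show "0 < e / (?L + 1)" using e by (simp add: add_nonneg_pos)
    fix x' assume x': "x' \<in> {0..1}" and d: "dist x' x < e / (?L + 1)"
    have "dist (g x') (g x) = \<bar>x' - x\<bar> * ?L" using geodesic_dist[OF assms x' x] .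
    also have "\<dots> \<le> \<bar>x' - x\<bar> * (?L + 1)" by (simp add: mult_left_mono)
    also have "\<dots> < e"
    proof -
      have p: "0 < ?L + 1" by (simp add: add_nonneg_pos)
      have "\<bar>x' - x\<bar> < e / (?L + 1)" using d by (simp add: dist_real_def)
      thus ?thesis using p by (simp add: less_divide_eq)
    qed
    finally show "dist (g x') (g x) < e" .
  qed
qed

lemma geodesic_image_compact:
  assumes "geodesic g" shows "compact (g ` {0..1})"
  by (rule compact_continuous_image[OF geodesic_cont[OF assms]]) simp

lemma geo_convex_image:
  assumes "geodesic g" shows "geo_convex (g ` {0..1})"
  unfolding geo_convex_def
proof (intro ballI)
  fix a b assume "a \<in> g ` {0..1}" "b \<in> g ` {0..1}"
  then obtain u s where u: "u \<in> {0..1}" "a = g u" and s: "s \<in> {0..1}" "b = g s" by auto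
  let ?h = "\<lambda>t. g (u + t * (s - u))"
  have "?h ` {0..1} \<subseteq> g ` {0..1}"
  proof
    fix y assume "y \<in> ?h ` {0..1}"
    then obtain t where t: "t \<in> {0..1}" "y = ?h t" by auto
    have "u + t * (s - u) = (1 - t) * u + t * s" by (simp add: algebra_simps)
    moreover have "0 \<le> (1 - t) * u + t * s" using t u s by auto
    moreover have "(1 - t) * u + t * s \<le> (1 - t) * 1 + t * 1"
      using t u s by (intro add_mono mult_left_mono) auto
    ultimately have "u + t * (s - u) \<in> {0..1}" by simp
    thus "y \<in> g ` {0..1}" using t(2) by (rule rev_image_eqI)
  qed
  thus "\<exists>h. geodesic h \<and> h 0 = a \<and> h 1 = b \<and> h ` {0..1} \<subseteq> g ` {0..1}"
  proof (intro exI[of _ ?h] conjI)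
    show "geodesic ?h" using subgeodesic[OF assms u(1) s(1)] .
    show "?h 0 = a" using u by simp
    show "?h 1 = b" using s by simp
  qed
qed

lemma geo_convex_Inter:
  assumes "NPC_space TYPE('a::metric_space)" "\<forall>C\<in>F. geo_convex (C::'a set)"
  shows "geo_convex (\<Inter>F)"
  unfolding geo_convex_def
proof (intro ballI)
  fix a b assume a: "a \<in> \<Inter>F" and b: "b \<in> \<Inter>F"
  obtain g where g: "geodesic g" "g 0 = a" "g 1 = b" using NPC_geodesic_exists[OF assms(1)] by blast
  have "g ` {0..1} \<subseteq> C" if "C \<in> F" for C
  proof -
    have "geo_convex C" using assms(2) that by blast
    moreover have "a \<in> C" "b \<in> C" using a b that by auto
    ultimately obtain h where h: "geodesic h" "h 0 = a" "h 1 = b" "h ` {0..1} \<subseteq> C"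
      unfolding geo_convex_def by meson
    have "g t = h t" if "t \<in> {0..1}" for t
      using geodesic_unique[OF assms(1) g(1) h(1) _ _ that] g h by simp
    thus ?thesis using h(4) by auto
  qed
  hence "g ` {0..1} \<subseteq> \<Inter>F" by (rule Inter_greatest) blast
  thus "\<exists>g. geodesic g \<and> g 0 = a \<and> g 1 = b \<and> g ` {0..1} \<subseteq> \<Inter>F" using g by (intro exI[of _ g]) simp
qed

lemma geo_co_convex:
  assumes "NPC_space TYPE('a::metric_space)"
  shows "geo_convex (geo_co (S::'a set))"
  unfolding geo_co_def by (rule geo_convex_Inter[OF assms]) auto

lemma geo_co_sub: "S \<subseteq> geo_co S"
  unfolding geo_co_def by auto

lemma geo_co_least: "geo_convex C \<Longrightarrow> S \<subseteq> C \<Longrightarrow> geo_co S \<subseteq> C"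
  unfolding geo_co_def by auto

lemma geo_co_mono: "A \<subseteq> B \<Longrightarrow> geo_co A \<subseteq> geo_co B"
  unfolding geo_co_def by auto



lemma lin_help:
  "(fm::real) \<le> (a + b) / 2 - d / 4 \<Longrightarrow> a < del + x \<Longrightarrow> b < del + y \<Longrightarrow> del \<le> fm \<Longrightarrow> d < 2 * x + 2 * y"
  by (simp add: field_simps)

lemma min_exists:
  fixes f :: "'a::complete_space \<Rightarrow> real" and C :: "'a set"
  assumes ne: "C \<noteq> {}" and pos: "\<And>c. c \<in> C \<Longrightarrow> 0 \<le> f c" and cont: "continuous_on UNIV f"
    and mid: "\<And>a b. a \<in> C \<Longrightarrow> b \<in> C \<Longrightarrow> \<exists>\<mu>\<in>C. f \<mu> \<le> (f a + f b) / 2 - (dist a b)\<^sup>2 / 4"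
  shows "\<exists>y\<in>closure C. \<forall>c\<in>closure C. f y \<le> f c"
proof -
  define \<delta> where "\<delta> = Inf (f ` C)"
  have bdd: "bdd_below (f ` C)" using pos by (intro bdd_belowI[of _ 0]) auto
  have low: "\<delta> \<le> f c" if "c \<in> C" for c
    using cInf_lower[OF imageI[OF that] bdd] by (simp add: \<delta>_def)
  have "\<exists>c\<in>C. f c < \<delta> + inverse (real (Suc k))" for k
  proof -
    have "Inf (f ` C) < \<delta> + inverse (real (Suc k))" by (simp add: \<delta>_def)
    then obtain v where "v \<in> f ` C" "v < \<delta> + inverse (real (Suc k))"
      using cInf_lessD[of "f ` C"] ne by blast
    thus ?thesis by auto
  qed
  then obtain s where sC: "\<And>k. s k \<in> C" and sf: "\<And>k. f (s k) < \<delta> + inverse (real (Suc k))"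
    by metis
  have d2: "(dist (s i) (s j))\<^sup>2 < 2 * inverse (real (Suc i)) + 2 * inverse (real (Suc j))" for i j
  proof -
    obtain \<mu> where mu: "\<mu> \<in> C" "f \<mu> \<le> (f (s i) + f (s j)) / 2 - (dist (s i) (s j))\<^sup>2 / 4"
      using mid[OF sC sC] by blast
    have "\<delta> \<le> f \<mu>" using low[OF mu(1)] .
    from lin_help[OF mu(2) sf[of i] sf[of j] this] show ?thesis .
  qed
  have "Cauchy s"
  proof (rule metric_CauchyI)
    fix e :: real assume e: "0 < e"
    obtain M :: nat where M: "4 / e\<^sup>2 < real M" using reals_Archimedean2 by blast
    have e2: "0 < e\<^sup>2" using e by simp
    show "\<exists>M. \<forall>m\<ge>M. \<forall>n\<ge>M. dist (s m) (s n) < e"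
    proof (intro exI[of _ M] allI impI)
      fix m n assume mM: "M \<le> m" and nM: "M \<le> n"
      have im: "inverse (real (Suc m)) \<le> inverse (real (Suc M))"
        using mM by (simp add: le_imp_inverse_le)
      have inn: "inverse (real (Suc n)) \<le> inverse (real (Suc M))"
        using nM by (simp add: le_imp_inverse_le)
      have "4 / e\<^sup>2 < real (Suc M)" using M by simp
      hence "4 < e\<^sup>2 * real (Suc M)" using e2 by (simp add: divide_less_eq mult.commute)
      hence "4 * inverse (real (Suc M)) < e\<^sup>2"
        by (simp add: field_simps)
      hence "(dist (s m) (s n))\<^sup>2 < e\<^sup>2" using d2[of m n] im inn by linarith
      thus "dist (s m) (s n) < e" using e by (simp add: power_less_imp_less_base)
    qed
  qed
  then obtain y where y: "s \<longlonglongrightarrow> y" using Cauchy_convergent_iff convergent_def by blast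
  have yC: "y \<in> closure C" using closure_sequential sC y by blast
  have ic: "isCont f z" for z using cont continuous_on_eq_continuous_at[OF open_UNIV] by blast
  have fy: "(\<lambda>k. f (s k)) \<longlonglongrightarrow> f y" using isCont_tendsto_compose[OF ic y] .
  have fd: "(\<lambda>k. f (s k)) \<longlonglongrightarrow> \<delta>"
  proof (rule tendsto_sandwich[OF _ _ tendsto_const LIMSEQ_inverse_real_of_nat_add[of \<delta>]])
    show "\<forall>\<^sub>F n in sequentially. \<delta> \<le> f (s n)" using low sC by (intro always_eventually allI) blast
    show "\<forall>\<^sub>F n in sequentially. f (s n) \<le> \<delta> + inverse (real (Suc n))" using sf by (intro always_eventually allI less_imp_le) blast
  qed
  have fyd: "f y = \<delta>" using LIMSEQ_unique[OF fy fd] .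
  have "f y \<le> f c" if c: "c \<in> closure C" for c
  proof -
    obtain cs where cs: "\<And>k. cs k \<in> C" "cs \<longlonglongrightarrow> c" using closure_sequential c by metis
    have "(\<lambda>k. f (cs k)) \<longlonglongrightarrow> f c" using isCont_tendsto_compose[OF ic cs(2)] .
    moreover have "\<forall>k. f y \<le> f (cs k)" using low cs(1) fyd by simp
    ultimately show ?thesis using LIMSEQ_le_const by blast
  qed
  thus ?thesis using yC by blast
qed

lemma mid_sq:
  assumes npc: "NPC_space TYPE('a::metric_space)" and cv: "geo_convex (C :: 'a set)"
    and a: "a \<in> C" and b: "b \<in> C"
  shows "\<exists>\<mu>\<in>C. \<forall>q. (dist q \<mu>)\<^sup>2 \<le> (dist q a)\<^sup>2 / 2 + (dist q b)\<^sup>2 / 2 - (dist a b)\<^sup>2 / 4"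
proof -
  obtain h where h: "geodesic h" "h 0 = a" "h 1 = b" "h ` {0..1} \<subseteq> C"
    using cv a b unfolding geo_convex_def by meson
  have hC: "h (1/2) \<in> C" using h(4) by auto
  have "(dist q (h (1/2)))\<^sup>2 \<le> (dist q a)\<^sup>2 / 2 + (dist q b)\<^sup>2 / 2 - (dist a b)\<^sup>2 / 4" for q
    using NPC_ineq[OF npc h(1), of "1/2" q] h(2,3) by simp
  thus ?thesis using hC by blast
qed

lemma geo_convex_UNIV:
  assumes npc: "NPC_space TYPE('a::metric_space)"
  shows "geo_convex (UNIV :: 'a set)"
  unfolding geo_convex_def using NPC_geodesic_exists[OF npc] by blast

lemma proj_ineq:
  assumes npc: "NPC_space TYPE('a::metric_space)" and cv: "geo_convex (C :: 'a set)"
    and y: "y \<in> closure C"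
    and near: "\<And>c. c \<in> C \<Longrightarrow> dist x y \<le> dist x c" and c: "c \<in> closure C"
  shows "(dist y c)\<^sup>2 \<le> (dist x c)\<^sup>2 - (dist x y)\<^sup>2"
proof -
  obtain ys where ys: "\<And>k. ys k \<in> C" "ys \<longlonglongrightarrow> y" using closure_sequential y by metis
  have main: "(dist y c)\<^sup>2 \<le> (dist x c)\<^sup>2 - (dist x y)\<^sup>2" if cC: "c \<in> C" for c
  proof -
    have "(1 - t) * (dist y c)\<^sup>2 \<le> (dist x c)\<^sup>2 - (dist x y)\<^sup>2" if t: "0 < t" "t \<le> 1" for t
    proof -
      have ineq: "(dist x y)\<^sup>2 \<le> (1 - t) * (dist x (ys k))\<^sup>2 + t * (dist x c)\<^sup>2
                     - t * (1 - t) * (dist (ys k) c)\<^sup>2" for k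
      proof -
        obtain h where h: "geodesic h" "h 0 = ys k" "h 1 = c" "h ` {0..1} \<subseteq> C"
          using cv ys(1)[of k] cC unfolding geo_convex_def by meson
        have "h t \<in> C" using h(4) t by auto
        hence "dist x y \<le> dist x (h t)" by (rule near)
        hence "(dist x y)\<^sup>2 \<le> (dist x (h t))\<^sup>2" by (simp add: power_mono)
        also have "\<dots> \<le> (1 - t) * (dist x (ys k))\<^sup>2 + t * (dist x c)\<^sup>2
                     - t * (1 - t) * (dist (ys k) c)\<^sup>2"
          using NPC_ineq[OF npc h(1), of t x] t h(2,3) by simp
        finally show ?thesis .
      qed
      have lim: "(\<lambda>k. (1 - t) * (dist x (ys k))\<^sup>2 + t * (dist x c)\<^sup>2 - t * (1 - t) * (dist (ys k) c)\<^sup>2)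
          \<longlonglongrightarrow> (1 - t) * (dist x y)\<^sup>2 + t * (dist x c)\<^sup>2 - t * (1 - t) * (dist y c)\<^sup>2"
        by (intro tendsto_intros ys(2))
      have "(dist x y)\<^sup>2 \<le> (1 - t) * (dist x y)\<^sup>2 + t * (dist x c)\<^sup>2 - t * (1 - t) * (dist y c)\<^sup>2"
        by (rule LIMSEQ_le_const[OF lim]) (use ineq in auto)
      hence "t * ((1 - t) * (dist y c)\<^sup>2) \<le> t * ((dist x c)\<^sup>2 - (dist x y)\<^sup>2)"
        by (simp add: algebra_simps)
      thus ?thesis using t by simp
    qed
    thus ?thesis by (rule real_lim_t)
  qed
  obtain cs where cs: "\<And>k. cs k \<in> C" "cs \<longlonglongrightarrow> c" using closure_sequential c by metis
  have l1: "(\<lambda>k. (dist y (cs k))\<^sup>2) \<longlonglongrightarrow> (dist y c)\<^sup>2" by (intro tendsto_intros cs(2))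
  have l2: "(\<lambda>k. (dist x (cs k))\<^sup>2 - (dist x y)\<^sup>2) \<longlonglongrightarrow> (dist x c)\<^sup>2 - (dist x y)\<^sup>2"
    by (intro tendsto_intros cs(2))
  show ?thesis by (rule LIMSEQ_le[OF l1 l2]) (use main cs(1) in auto)
qed

lemma nearest_exists:
  assumes npc: "NPC_space TYPE('a::complete_space)" and cv: "geo_convex (C :: 'a set)"
    and ne: "C \<noteq> {}"
  shows "\<exists>y\<in>closure C. \<forall>c\<in>closure C. dist x y \<le> dist x c"
proof -
  have "\<exists>y\<in>closure C. \<forall>c\<in>closure C. (\<lambda>z. (dist x z)\<^sup>2) y \<le> (\<lambda>z. (dist x z)\<^sup>2) c"
  proof (rule min_exists[OF ne])
    show "continuous_on UNIV (\<lambda>z. (dist x z)\<^sup>2)" by (intro continuous_intros)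
    fix a b assume "a \<in> C" "b \<in> C"
    then obtain \<mu> where mu: "\<mu> \<in> C" "\<forall>q. (dist q \<mu>)\<^sup>2 \<le> (dist q a)\<^sup>2 / 2 + (dist q b)\<^sup>2 / 2 - (dist a b)\<^sup>2 / 4"
      using mid_sq[OF npc cv] by blast
    have "(dist x \<mu>)\<^sup>2 \<le> ((dist x a)\<^sup>2 + (dist x b)\<^sup>2) / 2 - (dist a b)\<^sup>2 / 4"
      using mu(2)[rule_format, of x] by (simp add: add_divide_distrib)
    thus "\<exists>\<mu>\<in>C. (\<lambda>z. (dist x z)\<^sup>2) \<mu> \<le> ((\<lambda>z. (dist x z)\<^sup>2) a + (\<lambda>z. (dist x z)\<^sup>2) b) / 2 - (dist a b)\<^sup>2 / 4"
      using mu(1) by (intro bexI[of _ \<mu>]) auto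
  qed simp
  then obtain y where "y \<in> closure C" "\<forall>c\<in>closure C. (dist x y)\<^sup>2 \<le> (dist x c)\<^sup>2" by auto
  thus ?thesis by (meson power2_le_imp_le zero_le_dist)
qed

lemma geo_proj:
  assumes npc: "NPC_space TYPE('a::complete_space)" and g: "geodesic (g :: real \<Rightarrow> 'a)"
  shows "geo_proj x g \<in> g ` {0..1}"
    and "\<And>c. c \<in> g ` {0..1} \<Longrightarrow> dist x (geo_proj x g) \<le> dist x c"
    and "\<And>c. c \<in> g ` {0..1} \<Longrightarrow> (dist (geo_proj x g) c)\<^sup>2 \<le> (dist x c)\<^sup>2 - (dist x (geo_proj x g))\<^sup>2"
proof -
  let ?G = "g ` {0..1}"
  have cl: "closure ?G = ?G" using geodesic_image_compact[OF g] compact_imp_closed closure_closed by blast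
  have cv: "geo_convex ?G" using geo_convex_image[OF g] .
  have ne: "?G \<noteq> {}" by auto
  obtain y where y: "y \<in> ?G" "\<forall>c\<in>?G. dist x y \<le> dist x c"
    using nearest_exists[OF npc cv ne, of x] cl by auto
  have uniq: "y2 = y" if "y2 \<in> ?G" "\<forall>c\<in>?G. dist x y2 \<le> dist x c" for y2
  proof -
    have "(dist y y2)\<^sup>2 \<le> (dist x y2)\<^sup>2 - (dist x y)\<^sup>2"
    proof -
      have yc: "y \<in> closure ?G" using y(1) cl by simp
      have cc: "y2 \<in> closure ?G" using that(1) cl by simp
      show ?thesis using proj_ineq[OF npc cv yc _ cc, of x] y(2) by blast
    qed
    moreover have "dist x y2 = dist x y" using y that by (meson order.antisym)
    ultimately show ?thesis by simp
  qed
  have eq: "geo_proj x g = y"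
    unfolding geo_proj_def
  proof (rule the_equality)
    show "y \<in> ?G \<and> (\<forall>z\<in>?G. dist x y \<le> dist x z)" using y by blast
    fix y2 assume "y2 \<in> ?G \<and> (\<forall>z\<in>?G. dist x y2 \<le> dist x z)"
    thus "y2 = y" using uniq by blast
  qed
  show "geo_proj x g \<in> ?G" using eq y by simp
  show "\<And>c. c \<in> ?G \<Longrightarrow> dist x (geo_proj x g) \<le> dist x c"
  proof -
    fix c assume "c \<in> ?G"
    hence "dist x y \<le> dist x c" using y(2) by blast
    thus "dist x (geo_proj x g) \<le> dist x c" using eq by simp
  qed
  show "\<And>c. c \<in> ?G \<Longrightarrow> (dist (geo_proj x g) c)\<^sup>2 \<le> (dist x c)\<^sup>2 - (dist x (geo_proj x g))\<^sup>2"
  proof -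
    fix c assume c: "c \<in> ?G"
    have yc: "y \<in> closure ?G" using y(1) cl by simp
    have cc: "c \<in> closure ?G" using c cl by simp
    show "(dist (geo_proj x g) c)\<^sup>2 \<le> (dist x c)\<^sup>2 - (dist x (geo_proj x g))\<^sup>2"
      using proj_ineq[OF npc cv yc _ cc, of x] y(2) eq by blast
  qed
qed

lemma geo_proj_eq:
  assumes npc: "NPC_space TYPE('a::complete_space)" and g: "geodesic (g :: real \<Rightarrow> 'a)"
    and y: "y \<in> g ` {0..1}" and near: "\<And>c. c \<in> g ` {0..1} \<Longrightarrow> dist x y \<le> dist x c"
  shows "geo_proj x g = y"
proof -
  let ?p = "geo_proj x g"
  have "(dist ?p y)\<^sup>2 \<le> (dist x y)\<^sup>2 - (dist x ?p)\<^sup>2" using geo_proj(3)[OF npc g y] .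
  moreover have "dist x y \<le> dist x ?p" using near geo_proj(1)[OF npc g] by blast
  moreover have "dist x ?p \<le> dist x y" using geo_proj(2)[OF npc g y] .
  ultimately show ?thesis by simp
qed



lemma Fn_npc:
  assumes npc: "NPC_space TYPE('a::metric_space)" and g: "geodesic (g :: real \<Rightarrow> 'a)"
    and t: "t \<in> {0..1}" and n: "1 \<le> n"
  shows "Fn T n (g t) r \<le> (1 - t) * Fn T n (g 0) r + t * Fn T n (g 1) r
            - t * (1 - t) * (dist (g 0) (g 1))\<^sup>2"
proof -
  define L where "L = dist (g 0) (g 1)"
  define S0 where "S0 = (\<Sum>i<n. (dist (g 0) ((T ^^ i) r))\<^sup>2)"
  define S1 where "S1 = (\<Sum>i<n. (dist (g 1) ((T ^^ i) r))\<^sup>2)"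
  define St where "St = (\<Sum>i<n. (dist (g t) ((T ^^ i) r))\<^sup>2)"
  have "St \<le> (\<Sum>i<n. (1 - t) * (dist (g 0) ((T ^^ i) r))\<^sup>2 + t * (dist (g 1) ((T ^^ i) r))\<^sup>2
                  - t * (1 - t) * L\<^sup>2)"
    unfolding St_def
  proof (rule sum_mono)
    fix i show "(dist (g t) ((T ^^ i) r))\<^sup>2 \<le> (1 - t) * (dist (g 0) ((T ^^ i) r))\<^sup>2
        + t * (dist (g 1) ((T ^^ i) r))\<^sup>2 - t * (1 - t) * L\<^sup>2"
      using NPC_ineq[OF npc g t, of "(T ^^ i) r"] by (simp add: dist_commute L_def)
  qed
  also have "\<dots> = (1 - t) * S0 + t * S1 - real n * (t * (1 - t) * L\<^sup>2)"
    by (simp add: sum.distrib sum_subtractf sum_distrib_left S0_def S1_def)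
  finally have H: "St \<le> (1 - t) * S0 + t * S1 - real n * (t * (1 - t) * L\<^sup>2)" .
  have np: "0 < real n" using n by simp
  have "1 / real n * St \<le> 1 / real n * ((1 - t) * S0 + t * S1 - real n * (t * (1 - t) * L\<^sup>2))"
    using H np by (intro mult_left_mono) auto
  also have "\<dots> = (1 - t) * (1 / real n * S0) + t * (1 / real n * S1) - t * (1 - t) * L\<^sup>2"
    using np by (simp add: field_simps)
  finally show ?thesis unfolding Fn_def St_def S0_def S1_def L_def .
qed

lemma Fn_cont: "continuous_on UNIV (\<lambda>z. Fn T n z r)"
  unfolding Fn_def by (intro continuous_intros)

lemma Fn_nonneg: "0 \<le> Fn T n z r"
  unfolding Fn_def by (simp add: sum_nonneg)

lemma Fn_mid:
  assumes npc: "NPC_space TYPE('a::metric_space)" and n: "1 \<le> n"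
  shows "\<exists>\<mu>. Fn T n \<mu> r \<le> (Fn T n a r + Fn T n b r) / 2 - (dist a (b::'a))\<^sup>2 / 4"
proof -
  obtain g where g: "geodesic g" "g 0 = a" "g 1 = b" using NPC_geodesic_exists[OF npc] by blast
  have "Fn T n (g (1/2)) r \<le> (1 - 1/2) * Fn T n (g 0) r + 1/2 * Fn T n (g 1) r
            - 1/2 * (1 - 1/2) * (dist (g 0) (g 1))\<^sup>2"
    using Fn_npc[OF npc g(1) _ n, of "1/2" T r] by simp
  thus ?thesis using g(2,3) by (intro exI[of _ "g (1/2)"]) (simp add: field_simps)
qed

lemma lin2: "(a::real) = b \<Longrightarrow> a \<le> m \<Longrightarrow> m \<le> (a + b) / 2 - d / 4 \<Longrightarrow> d \<le> 0"
  by (simp add: field_simps)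

lemma mn_min:
  assumes npc: "NPC_space TYPE('a::complete_space)" and n: "1 \<le> n"
  shows "Fn T n (mn T n r) r \<le> Fn T n (z::'a) r"
proof -
  have "\<exists>y\<in>closure UNIV. \<forall>c\<in>closure UNIV. (\<lambda>z. Fn T n z r) y \<le> (\<lambda>z. Fn T n z r) c"
  proof (rule min_exists)
    fix a b :: 'a
    show "\<exists>\<mu>\<in>UNIV. Fn T n \<mu> r \<le> (Fn T n a r + Fn T n b r) / 2 - (dist a b)\<^sup>2 / 4"
      using Fn_mid[OF npc n] by blast
  qed (auto simp: Fn_nonneg Fn_cont)
  then obtain y where y: "\<forall>c. Fn T n y r \<le> Fn T n c r" by auto
  have uniq: "y2 = y" if y2: "\<forall>c. Fn T n y2 r \<le> Fn T n c r" for y2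
  proof -
    obtain \<mu> where mu: "Fn T n \<mu> r \<le> (Fn T n y r + Fn T n y2 r) / 2 - (dist y y2)\<^sup>2 / 4"
      using Fn_mid[OF npc n] by blast
    have "Fn T n y r = Fn T n y2 r" using y y2 by (meson order.antisym)
    moreover have "Fn T n y r \<le> Fn T n \<mu> r" using y by blast
    ultimately have "(dist y y2)\<^sup>2 \<le> 0" using mu lin2 by blast
    thus ?thesis by simp
  qed
  have "mn T n r = y" unfolding mn_def
  proof (rule the_equality)
    show "\<forall>r'. Fn T n y r \<le> Fn T n r' r" using y by blast
    fix y2 assume "\<forall>r'. Fn T n y2 r \<le> Fn T n r' r"
    thus "y2 = y" using uniq by blast
  qed
  thus ?thesis using y by simp
qed

lemma mn_var:
  assumes npc: "NPC_space TYPE('a::complete_space)" and n: "1 \<le> n"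
  shows "Fn T n (mn T n r) r + (dist z (mn T n r))\<^sup>2 \<le> Fn T n (z::'a) r"
proof -
  define m where "m = mn T n r"
  obtain g where g: "geodesic g" "g 0 = m" "g 1 = z" using NPC_geodesic_exists[OF npc] by blast
  have "(1 - t) * (dist m z)\<^sup>2 \<le> Fn T n z r - Fn T n m r" if t: "0 < t" "t \<le> 1" for t
  proof -
    have "Fn T n m r \<le> Fn T n (g t) r" using mn_min[OF npc n] m_def by simp
    also have "\<dots> \<le> (1 - t) * Fn T n m r + t * Fn T n z r - t * (1 - t) * (dist m z)\<^sup>2"
      using Fn_npc[OF npc g(1) _ n, of t] t g(2,3) by simp
    finally have "t * ((1 - t) * (dist m z)\<^sup>2) \<le> t * (Fn T n z r - Fn T n m r)"
      by (simp add: algebra_simps)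
    thus ?thesis using t by simp
  qed
  hence "(dist m z)\<^sup>2 \<le> Fn T n z r - Fn T n m r" by (rule real_lim_t)
  thus ?thesis by (simp add: m_def dist_commute)
qed

lemma iter_nonexp:
  assumes "nonexpansive T"
  shows "dist ((T ^^ i) a) ((T ^^ i) b) \<le> dist a b"
proof (induction i)
  case 0 show ?case by simp
next
  case (Suc i)
  have "dist ((T ^^ Suc i) a) ((T ^^ Suc i) b) \<le> dist ((T ^^ i) a) ((T ^^ i) b)"
    using assms unfolding nonexpansive_def by simp
  thus ?case using Suc by simp
qed

lemma iter_fix: "T q = q \<Longrightarrow> (T ^^ i) q = q"
  by (induction i) auto

lemma mn_bound:
  assumes npc: "NPC_space TYPE('a::complete_space)" and n: "1 \<le> n"
    and B: "\<And>i. i < n \<Longrightarrow> dist (z::'a) ((T ^^ i) r) \<le> B"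
  shows "dist z (mn T n r) \<le> B"
proof -
  have "dist z ((T ^^ 0) r) \<le> B" using B[of 0] n by simp
  hence B0: "0 \<le> B" using zero_le_dist order.trans by blast
  have "(\<Sum>i<n. (dist z ((T ^^ i) r))\<^sup>2) \<le> (\<Sum>i<n. B\<^sup>2)"
    using B by (intro sum_mono power_mono) auto
  hence "Fn T n z r \<le> 1 / real n * (real n * B\<^sup>2)" unfolding Fn_def
    by (intro mult_left_mono) auto
  also have "\<dots> = B\<^sup>2" using n by simp
  finally have F: "Fn T n z r \<le> B\<^sup>2" .
  have V: "Fn T n (mn T n r) r + (dist z (mn T n r))\<^sup>2 \<le> Fn T n z r" using mn_var[OF npc n] .
  have "0 \<le> Fn T n (mn T n r) r" by (rule Fn_nonneg)
  hence "(dist z (mn T n r))\<^sup>2 \<le> B\<^sup>2" using F V by linarith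
  thus ?thesis by (rule power2_le_imp_le[OF _ B0])
qed

lemma sum_split_nat:
  fixes a :: "nat \<Rightarrow> real"
  shows "(\<Sum>i<m + n. a i) = (\<Sum>i<m. a i) + (\<Sum>i<n. a (i + m))"
  by (induction n) (simp_all add: ac_simps)

lemma sum_shift_diff:
  fixes a :: "nat \<Rightarrow> real"
  shows "(\<Sum>i<n. a i) - (\<Sum>i<n. a (i + k)) = (\<Sum>i<k. a i) - (\<Sum>i<k. a (i + n))"
  using sum_split_nat[of a n k] sum_split_nat[of a k n] by (simp add: add.commute)

lemma sum_diff_bound:
  fixes a :: "nat \<Rightarrow> real"
  assumes "\<And>i. 0 \<le> a i" "\<And>i. a i \<le> B"
  shows "(\<Sum>i<k. a i) - (\<Sum>i<k. a (i + n)) \<le> real k * B"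
proof -
  have "(\<Sum>i<k. a i) \<le> (\<Sum>i<k. B)" using assms by (intro sum_mono) auto
  moreover have "0 \<le> (\<Sum>i<k. a (i + n))" using assms by (intro sum_nonneg) auto
  ultimately show ?thesis by simp
qed



lemma seq_to_zero:
  fixes f :: "nat \<Rightarrow> real"
  assumes "\<And>n. 0 \<le> f n" "\<And>n. (f n)\<^sup>2 \<le> C * inverse (real (Suc n))"
  shows "f \<longlonglongrightarrow> 0"
proof (rule tendsto_sandwich[of "\<lambda>n. 0" _ _ "\<lambda>n. sqrt (C * inverse (real (Suc n)))"])
  show "\<forall>\<^sub>F n in sequentially. 0 \<le> f n" using assms(1) by simp
  show "\<forall>\<^sub>F n in sequentially. f n \<le> sqrt (C * inverse (real (Suc n)))"
    using assms(2) real_le_rsqrt by (intro always_eventually allI) blast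
  show "(\<lambda>n. 0::real) \<longlonglongrightarrow> 0" by simp
  have "(\<lambda>n. C * inverse (real (Suc n))) \<longlonglongrightarrow> C * 0"
    by (rule tendsto_mult[OF tendsto_const LIMSEQ_inverse_real_of_nat])
  hence "(\<lambda>n. sqrt (C * inverse (real (Suc n)))) \<longlonglongrightarrow> sqrt (C * 0)" by (rule tendsto_real_sqrt)
  thus "(\<lambda>n. sqrt (C * inverse (real (Suc n)))) \<longlonglongrightarrow> 0" by simp
qed

lemma sublevel_convex:
  assumes npc: "NPC_space TYPE('a::metric_space)" and dc: "distance_convex T" and n: "1 \<le> n"
  shows "geo_convex {s::'a. dist (mn T n s) w \<le> M}"
  unfolding geo_convex_def
proof (intro ballI)
  fix a b assume a: "a \<in> {s. dist (mn T n s) w \<le> M}" and b: "b \<in> {s. dist (mn T n s) w \<le> M}"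
  obtain g where g: "geodesic g" "g 0 = a" "g 1 = b" using NPC_geodesic_exists[OF npc] by blast
  have cv: "convex_on {0..1} (\<lambda>t. (dist (mn T n (g t)) w)\<^sup>2)"
    using dc g(1) n unfolding distance_convex_def by blast
  have M0: "0 \<le> M" using a zero_le_dist order.trans by blast
  have da: "(dist (mn T n (g 0)) w)\<^sup>2 \<le> M\<^sup>2" using a g(2) by (simp add: power_mono)
  have db: "(dist (mn T n (g 1)) w)\<^sup>2 \<le> M\<^sup>2" using b g(3) by (simp add: power_mono)
  have "g t \<in> {s. dist (mn T n s) w \<le> M}" if t: "t \<in> {0..1}" for t
  proof -
    have "(dist (mn T n (g ((1 - t) *\<^sub>R 0 + t *\<^sub>R 1))) w)\<^sup>2
          \<le> (1 - t) * (dist (mn T n (g 0)) w)\<^sup>2 + t * (dist (mn T n (g 1)) w)\<^sup>2"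
      using convex_onD[OF cv, of t 0 1] t by simp
    also have "\<dots> \<le> (1 - t) * M\<^sup>2 + t * M\<^sup>2"
      using t da db by (intro add_mono mult_left_mono) auto
    also have "\<dots> = M\<^sup>2" by (simp add: algebra_simps)
    finally have "(dist (mn T n (g t)) w)\<^sup>2 \<le> M\<^sup>2" by simp
    hence "dist (mn T n (g t)) w \<le> M" by (rule power2_le_imp_le[OF _ M0])
    thus ?thesis by simp
  qed
  thus "\<exists>g. geodesic g \<and> g 0 = a \<and> g 1 = b \<and> g ` {0..1} \<subseteq> {s. dist (mn T n s) w \<le> M}"
    using g by (intro exI[of _ g]) blast
qed

lemma geo_co_finite:
  assumes npc: "NPC_space TYPE('a::metric_space)"
    and r: "r \<in> geo_co (range (x :: nat \<Rightarrow> 'a))"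
  shows "\<exists>N. r \<in> geo_co (x ` {..N})"
proof -
  define U where "U = {r. \<exists>N. r \<in> geo_co (x ` {..N})}"
  have "geo_convex U" unfolding geo_convex_def
  proof (intro ballI)
    fix a b assume "a \<in> U" "b \<in> U"
    then obtain N1 N2 where a: "a \<in> geo_co (x ` {..N1})" and b: "b \<in> geo_co (x ` {..N2})"
      unfolding U_def by blast
    let ?N = "max N1 N2"
    have s1: "geo_co (x ` {..N1}) \<subseteq> geo_co (x ` {..?N})" by (rule geo_co_mono) auto
    have s2: "geo_co (x ` {..N2}) \<subseteq> geo_co (x ` {..?N})" by (rule geo_co_mono) auto
    have "a \<in> geo_co (x ` {..?N})" "b \<in> geo_co (x ` {..?N})" using a b s1 s2 by auto
    then obtain h where h: "geodesic h" "h 0 = a" "h 1 = b" "h ` {0..1} \<subseteq> geo_co (x ` {..?N})"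
      using geo_co_convex[OF npc, of "x ` {..?N}"] unfolding geo_convex_def by meson
    have "h ` {0..1} \<subseteq> U" using h(4) unfolding U_def by blast
    thus "\<exists>g. geodesic g \<and> g 0 = a \<and> g 1 = b \<and> g ` {0..1} \<subseteq> U" using h by blast
  qed
  moreover have "range x \<subseteq> U"
  proof
    fix y assume "y \<in> range x"
    then obtain k where "y = x k" by auto
    moreover have "x k \<in> geo_co (x ` {..k})" using geo_co_sub[of "x ` {..k}"] by auto
    ultimately show "y \<in> U" unfolding U_def by blast
  qed
  ultimately have "geo_co (range x) \<subseteq> U" by (rule geo_co_least)
  thus ?thesis using r unfolding U_def by blast
qed

locale setting =
  fixes T :: "'a::complete_space \<Rightarrow> 'a" and p :: 'a and R :: real
  assumes npc: "NPC_space TYPE('a)"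
    and ne: "nonexpansive T"
    and dc: "distance_convex T"
    and orb: "\<And>i. dist p ((T ^^ i) p) \<le> R"
begin

lemma R0: "0 \<le> R" using orb[of 0] by simp

lemma mn_near_shift:
  assumes n: "1 \<le> n"
  shows "dist p (mn T n ((T ^^ k) p)) \<le> R"
proof (rule mn_bound[OF npc n])
  fix i show "dist p ((T ^^ i) ((T ^^ k) p)) \<le> R"
    using orb[of "i + k"] by (simp add: funpow_add)
qed

lemma mn_near: "1 \<le> n \<Longrightarrow> dist p (mn T n p) \<le> R"
  using mn_near_shift[of n 0] by simp

lemma stab:
  assumes n: "1 \<le> n"
  shows "(dist (mn T n p) (mn T n ((T ^^ k) p)))\<^sup>2 \<le> real k * (2 * R)\<^sup>2 / real n"
proof -
  define m where "m = mn T n p"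
  define m' where "m' = mn T n ((T ^^ k) p)"
  define B where "B = (2 * R)\<^sup>2"
  define a where "a z i = (dist z ((T ^^ i) p))\<^sup>2" for z i
  have Fdef: "Fn T n z p = 1 / real n * (\<Sum>i<n. a z i)" for z unfolding Fn_def a_def ..
  have Gdef: "Fn T n z ((T ^^ k) p) = 1 / real n * (\<Sum>i<n. a z (i + k))" for z
    unfolding Fn_def a_def by (simp add: funpow_add)
  have abd: "0 \<le> a z i \<and> a z i \<le> B" if z: "dist p z \<le> R" for z i
  proof -
    have "dist z ((T ^^ i) p) \<le> dist p z + dist p ((T ^^ i) p)" by (metis dist_commute dist_triangle)
    also have "\<dots> \<le> 2 * R" using z orb[of i] by simp
    finally have h: "dist z ((T ^^ i) p) \<le> 2 * R" .
    have "(dist z ((T ^^ i) p))\<^sup>2 \<le> (2 * R)\<^sup>2" by (rule power_mono[OF h zero_le_dist])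
    thus ?thesis unfolding a_def B_def by simp
  qed
  have diff: "(\<Sum>i<n. a z i) - (\<Sum>i<n. a z (i + k)) \<le> real k * B"
    "(\<Sum>i<n. a z (i + k)) - (\<Sum>i<n. a z i) \<le> real k * B" if z: "dist p z \<le> R" for z
  proof -
    have e: "(\<Sum>i<n. a z i) - (\<Sum>i<n. a z (i + k)) = (\<Sum>i<k. a z i) - (\<Sum>i<k. a z (i + n))"
      by (rule sum_shift_diff)
    have s1: "(\<Sum>i<k. a z i) \<le> real k * B"
      using sum_mono[of "{..<k}" "a z" "\<lambda>i. B"] abd[OF z] by simp
    have s2: "(\<Sum>i<k. a z (i + n)) \<le> real k * B"
      using sum_mono[of "{..<k}" "\<lambda>i. a z (i + n)" "\<lambda>i. B"] abd[OF z] by simp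
    have s3: "0 \<le> (\<Sum>i<k. a z i)" using abd[OF z] by (intro sum_nonneg) auto
    have s4: "0 \<le> (\<Sum>i<k. a z (i + n))" using abd[OF z] by (intro sum_nonneg) auto
    show "(\<Sum>i<n. a z i) - (\<Sum>i<n. a z (i + k)) \<le> real k * B" using e s1 s4 by linarith
    show "(\<Sum>i<n. a z (i + k)) - (\<Sum>i<n. a z i) \<le> real k * B" using e s2 s3 by linarith
  qed
  have V1: "Fn T n m p + (dist m' m)\<^sup>2 \<le> Fn T n m' p" using mn_var[OF npc n] m_def by simp
  have V2: "Fn T n m' ((T ^^ k) p) + (dist m m')\<^sup>2 \<le> Fn T n m ((T ^^ k) p)"
    using mn_var[OF npc n] m'_def by simp
  have zm: "dist p m \<le> R" using mn_near[OF n] m_def by simp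
  have zm': "dist p m' \<le> R" using mn_near_shift[OF n] m'_def by simp
  have np: "0 < real n" using n by simp
  have "2 * (dist m m')\<^sup>2 \<le> (Fn T n m' p - Fn T n m' ((T ^^ k) p)) + (Fn T n m ((T ^^ k) p) - Fn T n m p)"
    using V1 V2 by (simp add: dist_commute)
  also have "Fn T n m' p - Fn T n m' ((T ^^ k) p) = 1 / real n * ((\<Sum>i<n. a m' i) - (\<Sum>i<n. a m' (i + k)))"
    unfolding Fdef Gdef by (simp add: right_diff_distrib)
  also have "Fn T n m ((T ^^ k) p) - Fn T n m p = 1 / real n * ((\<Sum>i<n. a m (i + k)) - (\<Sum>i<n. a m i))"
    unfolding Fdef Gdef by (simp add: right_diff_distrib)
  also have "1 / real n * ((\<Sum>i<n. a m' i) - (\<Sum>i<n. a m' (i + k)))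
      + 1 / real n * ((\<Sum>i<n. a m (i + k)) - (\<Sum>i<n. a m i)) \<le> 1 / real n * (real k * B) + 1 / real n * (real k * B)"
    using diff[OF zm] diff[OF zm'] np by (intro add_mono mult_left_mono) auto
  finally have "2 * (dist m m')\<^sup>2 \<le> 2 * (real k * B / real n)" by (simp add: mult.commute)
  thus ?thesis unfolding m_def m'_def B_def by simp
qed

lemma stab_lim:
  "(\<lambda>n. dist (mn T (Suc n) ((T ^^ k) p)) (mn T (Suc n) p)) \<longlonglongrightarrow> 0"
proof (rule seq_to_zero)
  fix n
  show "0 \<le> dist (mn T (Suc n) ((T ^^ k) p)) (mn T (Suc n) p)" by simp
  have "(dist (mn T (Suc n) p) (mn T (Suc n) ((T ^^ k) p)))\<^sup>2 \<le> real k * (2 * R)\<^sup>2 / real (Suc n)"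
    by (rule stab) simp
  thus "(dist (mn T (Suc n) ((T ^^ k) p)) (mn T (Suc n) p))\<^sup>2 \<le> (real k * (2 * R)\<^sup>2) * inverse (real (Suc n))"
    by (simp add: dist_commute divide_inverse)
qed

lemma approx_fix_bound:
  "(dist (T (mn T (Suc n) p)) (mn T (Suc n) p))\<^sup>2 \<le> (2 * R)\<^sup>2 * inverse (real (Suc n))"
proof -
  define m where "m = mn T (Suc n) p"
  define S where "S z = (\<Sum>i<Suc n. (dist z ((T ^^ i) p))\<^sup>2)" for z
  have F: "Fn T (Suc n) z p = S z / real (Suc n)" for z unfolding Fn_def S_def by simp
  have V: "Fn T (Suc n) m p + (dist (T m) m)\<^sup>2 \<le> Fn T (Suc n) (T m) p"
    using mn_var[OF npc, of "Suc n"] m_def by simp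
  have dTm: "dist (T m) p \<le> 2 * R"
  proof -
    have "dist (T m) p \<le> dist (T m) (T p) + dist (T p) p" by (rule dist_triangle)
    also have "dist (T m) (T p) \<le> dist m p" using ne unfolding nonexpansive_def by blast
    also have "dist m p \<le> R" using mn_near[of "Suc n"] m_def by (simp add: dist_commute)
    also have "dist (T p) p \<le> R" using orb[of 1] by (simp add: dist_commute)
    finally show ?thesis by simp
  qed
  have "S (T m) = (dist (T m) ((T ^^ 0) p))\<^sup>2 + (\<Sum>i<n. (dist (T m) ((T ^^ Suc i) p))\<^sup>2)"
    unfolding S_def by (rule sum.lessThan_Suc_shift)
  also have "(\<Sum>i<n. (dist (T m) ((T ^^ Suc i) p))\<^sup>2) \<le> (\<Sum>i<n. (dist m ((T ^^ i) p))\<^sup>2)"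
  proof (rule sum_mono)
    fix i
    have "dist (T m) ((T ^^ Suc i) p) \<le> dist m ((T ^^ i) p)"
      using ne unfolding nonexpansive_def by simp
    thus "(dist (T m) ((T ^^ Suc i) p))\<^sup>2 \<le> (dist m ((T ^^ i) p))\<^sup>2" by (simp add: power_mono)
  qed
  also have "(\<Sum>i<n. (dist m ((T ^^ i) p))\<^sup>2) \<le> S m" unfolding S_def by simp
  also have "(dist (T m) ((T ^^ 0) p))\<^sup>2 \<le> (2 * R)\<^sup>2" using power_mono[OF dTm zero_le_dist, of 2] by simp
  finally have S1: "S (T m) \<le> (2 * R)\<^sup>2 + S m" by simp
  have np: "0 < real (Suc n)" by simp
  have "(dist (T m) m)\<^sup>2 \<le> S (T m) / real (Suc n) - S m / real (Suc n)" using V F by simp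
  also have "\<dots> = (S (T m) - S m) / real (Suc n)" by (simp add: diff_divide_distrib)
  also have "\<dots> \<le> (2 * R)\<^sup>2 / real (Suc n)" using S1 np by (intro divide_right_mono) auto
  finally show ?thesis unfolding m_def by (simp add: divide_inverse)
qed

lemma approx_fix: "(\<lambda>n. dist (T (mn T (Suc n) p)) (mn T (Suc n) p)) \<longlonglongrightarrow> 0"
  by (rule seq_to_zero[OF zero_le_dist approx_fix_bound])

abbreviation K where "K \<equiv> closure (geo_co (range (\<lambda>i. (T ^^ i) p)))"

lemma mn_in_K:
  assumes n: "1 \<le> n"
  shows "mn T n p \<in> K"
proof -
  define C where "C = geo_co (range (\<lambda>i. (T ^^ i) p))"
  define m where "m = mn T n p"
  have cv: "geo_convex C" unfolding C_def by (rule geo_co_convex[OF npc])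
  have sub: "(T ^^ i) p \<in> C" for i unfolding C_def by (rule subsetD[OF geo_co_sub]) simp
  hence ne: "C \<noteq> {}" by (metis empty_iff)
  obtain y where y: "y \<in> closure C" "\<forall>c\<in>closure C. dist m y \<le> dist m c"
    using nearest_exists[OF npc cv ne, of m] by blast
  have pi: "(dist y ((T ^^ i) p))\<^sup>2 \<le> (dist m ((T ^^ i) p))\<^sup>2 - (dist m y)\<^sup>2" for i
  proof -
    have near: "dist m y \<le> dist m c" if "c \<in> C" for c
      using y(2) that closure_subset by blast
    have "(T ^^ i) p \<in> closure C" using sub closure_subset by blast
    from proj_ineq[where x=m, OF npc cv y(1) near this] show ?thesis .
  qed
  have "(\<Sum>i<n. (dist y ((T ^^ i) p))\<^sup>2) \<le> (\<Sum>i<n. (dist m ((T ^^ i) p))\<^sup>2 - (dist m y)\<^sup>2)"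
    using pi by (rule sum_mono)
  also have "\<dots> = (\<Sum>i<n. (dist m ((T ^^ i) p))\<^sup>2) - real n * (dist m y)\<^sup>2"
    by (simp add: sum_subtractf)
  finally have H: "(\<Sum>i<n. (dist y ((T ^^ i) p))\<^sup>2) \<le> (\<Sum>i<n. (dist m ((T ^^ i) p))\<^sup>2) - real n * (dist m y)\<^sup>2" .
  have "Fn T n m p \<le> Fn T n y p" using mn_min[OF npc n] m_def by simp
  hence "(\<Sum>i<n. (dist m ((T ^^ i) p))\<^sup>2) \<le> (\<Sum>i<n. (dist y ((T ^^ i) p))\<^sup>2)"
    unfolding Fn_def using n by (simp add: divide_le_cancel)
  with H have "real n * (dist m y)\<^sup>2 \<le> 0" by linarith
  hence "(dist m y)\<^sup>2 \<le> 0" using n by (simp add: mult_le_0_iff)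
  hence "m = y" by simp
  thus ?thesis using y(1) m_def C_def by simp
qed

lemma conv_main:
  assumes fx: "T q = q" and qK: "q \<in> K"
  shows "(\<lambda>n. mn T (Suc n) p) \<longlonglongrightarrow> q"
proof (rule metric_LIMSEQ_I)
  fix e :: real assume e: "0 < e"
  obtain r0 where r0: "r0 \<in> geo_co (range (\<lambda>i. (T ^^ i) p))" "dist r0 q < e / 2"
    using qK e unfolding closure_approachable by (meson half_gt_zero)
  obtain N where N: "r0 \<in> geo_co ((\<lambda>i. (T ^^ i) p) ` {..N})"
    using geo_co_finite[OF npc r0(1)] by blast
  define M where "M n = (\<Sum>k\<le>N. dist (mn T (Suc n) ((T ^^ k) p)) (mn T (Suc n) p))" for n
  have "M \<longlonglongrightarrow> (\<Sum>k\<le>N. 0)" unfolding M_def by (intro tendsto_sum stab_lim)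
  hence "M \<longlonglongrightarrow> 0" by simp
  hence "\<forall>\<^sub>F n in sequentially. M n < e / 2" using e by (intro order_tendstoD(2)) auto
  then obtain n0 where n0: "\<And>n. n \<ge> n0 \<Longrightarrow> M n < e / 2" unfolding eventually_sequentially by blast
  show "\<exists>no. \<forall>n\<ge>no. dist (mn T (Suc n) p) q < e"
  proof (intro exI[of _ n0] allI impI)
    fix n assume nn: "n \<ge> n0"
    define A where "A = {s. dist (mn T (Suc n) s) (mn T (Suc n) p) \<le> M n}"
    have cvA: "geo_convex A" unfolding A_def by (rule sublevel_convex[OF npc dc]) simp
    have "(\<lambda>i. (T ^^ i) p) ` {..N} \<subseteq> A"
    proof
      fix y assume "y \<in> (\<lambda>i. (T ^^ i) p) ` {..N}"
      then obtain k where k: "k \<le> N" "y = (T ^^ k) p" by auto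
      have "dist (mn T (Suc n) ((T ^^ k) p)) (mn T (Suc n) p) \<le> M n"
        unfolding M_def using k(1) by (intro member_le_sum) auto
      thus "y \<in> A" using k unfolding A_def by simp
    qed
    hence "geo_co ((\<lambda>i. (T ^^ i) p) ` {..N}) \<subseteq> A" by (rule geo_co_least[OF cvA])
    hence d1: "dist (mn T (Suc n) r0) (mn T (Suc n) p) \<le> M n" using N unfolding A_def by blast
    have d2: "dist q (mn T (Suc n) r0) \<le> dist q r0"
    proof (rule mn_bound[OF npc])
      fix i show "dist q ((T ^^ i) r0) \<le> dist q r0"
        using iter_nonexp[OF ne, of i q r0] iter_fix[where T=T and q=q and i=i, OF fx] by simp
    qed simp
    have "dist (mn T (Suc n) p) q \<le> dist q (mn T (Suc n) r0) + dist (mn T (Suc n) r0) (mn T (Suc n) p)"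
      by (metis dist_commute dist_triangle)
    also have "\<dots> < e / 2 + e / 2" using d1 d2 r0(2) n0[OF nn] by (simp add: dist_commute)
    finally show "dist (mn T (Suc n) p) q < e" by simp
  qed
qed

end



lemma geo_img0: "(g :: real \<Rightarrow> 'a) 0 \<in> g ` {0..1}" by (rule imageI) simp
lemma geo_img1: "(g :: real \<Rightarrow> 'a) 1 \<in> g ` {0..1}" by (rule imageI) simp

lemma key_real:
  fixes e d a A L dmp dpw dmw :: real
  assumes "0 \<le> e" "0 \<le> d" "0 \<le> a" "a \<le> A" "e \<le> L" "0 \<le> dmp" "a \<le> dmp + e"
    "0 \<le> dpw" "L \<le> e + dpw" "dpw\<^sup>2 \<le> dmw\<^sup>2 - dmp\<^sup>2" "0 \<le> dmw" "dmw \<le> d + a"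
  shows "(L - e)\<^sup>2 \<le> (d + e) * (2 * A + d + e)"
proof -
  have h1: "(L - e)\<^sup>2 \<le> dpw\<^sup>2" using assms by (intro power_mono) auto
  have h2: "dmw\<^sup>2 \<le> (d + a)\<^sup>2" using assms by (intro power_mono) auto
  show ?thesis
  proof (cases "e \<le> a")
    case True
    have "(a - e)\<^sup>2 \<le> dmp\<^sup>2" using assms True by (intro power_mono) auto
    hence "(L - e)\<^sup>2 \<le> (d + a)\<^sup>2 - (a - e)\<^sup>2" using h1 h2 assms(10) by linarith
    also have "(d + a)\<^sup>2 - (a - e)\<^sup>2 = (d + e) * (2 * a + d - e)" by (simp add: power2_eq_square algebra_simps)
    also have "\<dots> \<le> (d + e) * (2 * A + d + e)" using assms by (intro mult_left_mono) auto
    finally show ?thesis .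
  next
    case False
    have "0 \<le> dmp\<^sup>2" by simp
    hence "(L - e)\<^sup>2 \<le> (d + a)\<^sup>2" using h1 h2 assms(10) by linarith
    also have "\<dots> \<le> (d + e)\<^sup>2" using assms False by (intro power_mono) auto
    also have "\<dots> = (d + e) * (d + e)" by (simp add: power2_eq_square)
    also have "\<dots> \<le> (d + e) * (2 * A + d + e)" using assms by (intro mult_left_mono) auto
    finally show ?thesis .
  qed
qed

context setting
begin

abbreviation mm where "mm \<equiv> (\<lambda>n. mn T (Suc n) p)"

lemma cluster_to_fix:
  assumes cl: "\<And>e N. 0 < e \<Longrightarrow> \<exists>n\<ge>N. dist (mm n) q < e"
  shows "T q = q \<and> q \<in> K"
proof
  show "T q = q"
  proof (rule ccontr)
    assume "T q \<noteq> q"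
    hence d: "0 < dist (T q) q" by simp
    have "\<forall>\<^sub>F n in sequentially. dist (T (mm n)) (mm n) < dist (T q) q / 3"
      using d by (intro order_tendstoD(2)[OF approx_fix]) auto
    then obtain N where N: "\<And>n. n \<ge> N \<Longrightarrow> dist (T (mm n)) (mm n) < dist (T q) q / 3"
      unfolding eventually_sequentially by blast
    obtain n where n: "n \<ge> N" "dist (mm n) q < dist (T q) q / 3" using cl[of "dist (T q) q / 3" N] d by auto
    have t1: "dist (T q) q \<le> dist (T q) (T (mm n)) + dist (T (mm n)) q" by (rule dist_triangle)
    have t2: "dist (T (mm n)) q \<le> dist (T (mm n)) (mm n) + dist (mm n) q" by (rule dist_triangle)
    have t3: "dist (T q) (T (mm n)) \<le> dist q (mm n)" using ne unfolding nonexpansive_def by blast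
    have t4: "dist q (mm n) = dist (mm n) q" by (rule dist_commute)
    note t1 t2 t3 t4
    with n N[OF n(1)] show False by linarith
  qed
  show "q \<in> K"
  proof -
    have "\<forall>e>0. \<exists>y\<in>K. dist y q < e"
    proof (intro allI impI)
      fix e :: real assume "0 < e"
      then obtain n where "dist (mm n) q < e" using cl[of e 0] by blast
      moreover have "mm n \<in> K" by (rule mn_in_K) simp
      ultimately show "\<exists>y\<in>K. dist y q < e" by blast
    qed
    hence "q \<in> closure K" unfolding closure_approachable .
    thus ?thesis by simp
  qed
qed

lemma strong_to_A:
  assumes "mm \<longlonglongrightarrow> q"
  shows "T q = q \<and> q \<in> K"
proof (rule cluster_to_fix)
  fix e :: real and N :: nat assume "0 < e"
  then obtain n0 where "\<forall>n\<ge>n0. dist (mm n) q < e" using assms unfolding lim_sequentially by blast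
  thus "\<exists>n\<ge>N. dist (mm n) q < e" by (intro exI[of _ "max n0 N"]) auto
qed

lemma proj_closer:
  assumes g: "geodesic g" and q: "(q::'a) \<in> g ` {0..1}"
  shows "dist (geo_proj x g) q \<le> dist x q"
proof -
  have "(dist (geo_proj x g) q)\<^sup>2 \<le> (dist x q)\<^sup>2 - (dist x (geo_proj x g))\<^sup>2"
    using geo_proj(3)[OF npc g q] .
  hence "(dist (geo_proj x g) q)\<^sup>2 \<le> (dist x q)\<^sup>2" by (smt (verit) zero_le_power2)
  thus ?thesis by (rule power2_le_imp_le) simp
qed

lemma strong_to_weak:
  assumes "mm \<longlonglongrightarrow> q"
  shows "weak_limit mm q"
  unfolding weak_limit_def
proof (intro allI impI)
  fix g assume g: "geodesic g \<and> q \<in> g ` {0..1}"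
  show "(\<lambda>n. geo_proj (mm n) g) \<longlonglongrightarrow> q"
  proof (rule metric_LIMSEQ_I)
    fix e :: real assume "0 < e"
    then obtain n0 where "\<forall>n\<ge>n0. dist (mm n) q < e" using assms unfolding lim_sequentially by blast
    thus "\<exists>no. \<forall>n\<ge>no. dist (geo_proj (mm n) g) q < e"
      using proj_closer[of g q] g by (meson le_less_trans)
  qed
qed

lemma strong_to_cluster:
  assumes "mm \<longlonglongrightarrow> q"
  shows "weak_cluster_point mm q"
  unfolding weak_cluster_point_def
proof (intro allI impI)
  fix U assume U: "open U \<and> q \<in> U"
  then obtain e where e: "0 < e" "ball q e \<subseteq> U" using open_contains_ball by blast
  obtain n0 where n0: "\<forall>n\<ge>n0. dist (mm n) q < e" using assms e(1) unfolding lim_sequentially by blast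
  have "n \<in> {n. \<forall>g. geodesic g \<and> q \<in> g ` {0..1} \<longrightarrow> geo_proj (mm n) g \<in> U}" if n: "n \<ge> n0" for n
  proof -
    have "\<forall>g. geodesic g \<and> q \<in> g ` {0..1} \<longrightarrow> geo_proj (mm n) g \<in> U"
    proof (intro allI impI)
      fix g assume g: "geodesic g \<and> q \<in> g ` {0..1}"
      have "dist (geo_proj (mm n) g) q < e" using proj_closer[of g q "mm n"] g n0 n by (meson le_less_trans)
      hence "geo_proj (mm n) g \<in> ball q e" by (simp add: dist_commute)
      thus "geo_proj (mm n) g \<in> U" using e(2) by blast
    qed
    thus ?thesis by simp
  qed
  thus "infinite {n. \<forall>g. geodesic g \<and> q \<in> g ` {0..1} \<longrightarrow> geo_proj (mm n) g \<in> U}"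
    unfolding infinite_nat_iff_unbounded_le by (meson le_cases order.trans)
qed

lemma cluster_to_A:
  assumes wc: "weak_cluster_point mm q"
  shows "T q = q \<and> q \<in> K"
proof (rule cluster_to_fix)
  fix e :: real and N :: nat assume e: "0 < e"
  have "infinite {n. \<forall>g. geodesic g \<and> q \<in> g ` {0..1} \<longrightarrow> geo_proj (mm n) g \<in> ball q e}"
  proof -
    have "open (ball q e) \<and> q \<in> ball q e" using e by simp
    thus ?thesis using wc unfolding weak_cluster_point_def by blast
  qed
  then obtain n where n: "n \<ge> N" "\<forall>g. geodesic g \<and> q \<in> g ` {0..1} \<longrightarrow> geo_proj (mm n) g \<in> ball q e"
    unfolding infinite_nat_iff_unbounded_le by blast
  obtain g where g: "geodesic g" "g 0 = q" "g 1 = mm n" using NPC_geodesic_exists[OF npc] by blast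
  have q0: "q \<in> g ` {0..1}" using geo_img0[of g] unfolding g(2) .
  have m1: "mm n \<in> g ` {0..1}" using geo_img1[of g] unfolding g(3) .
  have "geo_proj (mm n) g = mm n" by (rule geo_proj_eq[OF npc g(1) m1]) simp
  hence "mm n \<in> ball q e" using n(2) g(1) q0 by metis
  thus "\<exists>n\<ge>N. dist (mm n) q < e" using n(1) by (auto simp: dist_commute)
qed

lemma weak_to_K:
  assumes wl: "weak_limit mm q"
  shows "q \<in> K"
proof -
  define C where "C = geo_co (range (\<lambda>i. (T ^^ i) p))"
  have cv: "geo_convex C" unfolding C_def by (rule geo_co_convex[OF npc])
  have sub: "(T ^^ i) p \<in> C" for i unfolding C_def by (rule subsetD[OF geo_co_sub]) simp
  hence ne: "C \<noteq> {}" by (metis empty_iff)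
  obtain y where y: "y \<in> closure C" "\<forall>c\<in>closure C. dist q y \<le> dist q c"
    using nearest_exists[OF npc cv ne, of q] by blast
  obtain g where g: "geodesic g" "g 0 = y" "g 1 = q" using NPC_geodesic_exists[OF npc] by blast
  define L where "L = dist y q"
  have proj: "geo_proj (mm n) g = y" for n
  proof (rule geo_proj_eq[OF npc g(1)])
    show "y \<in> g ` {0..1}" using geo_img0[of g] unfolding g(2) .
    fix c assume "c \<in> g ` {0..1}"
    then obtain t where t: "t \<in> {0..1}" "c = g t" by auto
    define z where "z = g t"
    obtain yt where yt: "yt \<in> closure C" "\<forall>c\<in>closure C. dist z yt \<le> dist z c"
      using nearest_exists[OF npc cv ne, of z] by blast
    have nearyt: "dist z yt \<le> dist z c" if "c \<in> C" for c using yt(2) that closure_subset by blast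
    have neary: "dist q y \<le> dist q c" if "c \<in> C" for c using y(2) that closure_subset by blast
    have "dist q yt \<le> dist q z + dist z yt" by (rule dist_triangle)
    also have "dist z yt \<le> dist z y" using yt(2) y(1) by blast
    also have "dist q z = (1 - t) * L" using geodesic_d1[OF g(1) t(1)] g unfolding z_def L_def
      by (simp add: dist_commute)
    also have "dist z y = t * L" using geodesic_d0[OF g(1) t(1)] g unfolding z_def L_def
      by (simp add: dist_commute)
    finally have "dist q yt \<le> L" by (simp add: algebra_simps)
    hence "(dist q yt)\<^sup>2 \<le> L\<^sup>2" by (intro power_mono) auto
    moreover have "(dist y yt)\<^sup>2 \<le> (dist q yt)\<^sup>2 - (dist q y)\<^sup>2"
      using proj_ineq[where x=q, OF npc cv y(1) neary yt(1)] .
    moreover have "(dist q y)\<^sup>2 = L\<^sup>2" unfolding L_def by (simp add: dist_commute)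
    ultimately have "(dist y yt)\<^sup>2 \<le> 0" by linarith
    hence yty: "yt = y" by simp
    have "mm n \<in> closure C" using mn_in_K[of "Suc n"] C_def by simp
    from proj_ineq[where x=z, OF npc cv yt(1) nearyt this]
    have "(dist yt (mm n))\<^sup>2 \<le> (dist z (mm n))\<^sup>2 - (dist z yt)\<^sup>2" .
    hence "(dist y (mm n))\<^sup>2 \<le> (dist z (mm n))\<^sup>2" using yty by (smt (verit) zero_le_power2)
    hence "dist y (mm n) \<le> dist z (mm n)" by (rule power2_le_imp_le) simp
    thus "dist (mm n) y \<le> dist (mm n) c" using t(2) z_def by (simp add: dist_commute)
  qed
  have "q \<in> g ` {0..1}" using geo_img1[of g] unfolding g(3) .
  hence "(\<lambda>n. geo_proj (mm n) g) \<longlonglongrightarrow> q" using wl g(1) unfolding weak_limit_def by blast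
  hence "(\<lambda>n. y) \<longlonglongrightarrow> q" using proj by simp
  hence "y = q" by (simp add: LIMSEQ_const_iff)
  thus ?thesis using y(1) C_def by simp
qed

lemma weak_to_fix:
  assumes wl: "weak_limit mm q"
  shows "T q = q"
proof (rule ccontr)
  assume nf: "T q \<noteq> q"
  define w where "w = T q"
  obtain g where g: "geodesic g" "g 0 = q" "g 1 = w" using NPC_geodesic_exists[OF npc] by blast
  define L where "L = dist q w"
  have L0: "0 < L" using nf unfolding L_def w_def by (simp add: dist_commute)
  define A where "A = R + dist p q"
  define \<pi> where "\<pi> n = geo_proj (mm n) g" for n
  define e where "e n = dist (\<pi> n) q" for n
  define d where "d n = dist (T (mm n)) (mm n)" for n
  have qG: "q \<in> g ` {0..1}" using geo_img0[of g] unfolding g(2) .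
  have wG: "w \<in> g ` {0..1}" using geo_img1[of g] unfolding g(3) .
  have pil: "\<pi> \<longlonglongrightarrow> q" using wl g(1) qG unfolding weak_limit_def \<pi>_def by blast
  have el: "e \<longlonglongrightarrow> 0" unfolding e_def using pil by (intro tendsto_dist_iff[THEN iffD1]) 
  have dl: "d \<longlonglongrightarrow> 0" unfolding d_def by (rule approx_fix)
  have ev: "\<forall>\<^sub>F n in sequentially. e n < L" using el L0 by (intro order_tendstoD(2)) auto
  have bound: "(L - e n)\<^sup>2 \<le> (d n + e n) * (2 * A + d n + e n)" if en: "e n < L" for n
  proof (rule key_real)
    show "0 \<le> e n" "0 \<le> d n" unfolding e_def d_def by simp_all
    show "0 \<le> dist (mm n) q" by simp
    show "dist (mm n) q \<le> A"
    proof -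
      have "dist (mm n) q \<le> dist (mm n) p + dist p q" by (rule dist_triangle)
      also have "dist (mm n) p \<le> R" using mn_near[of "Suc n"] by (simp add: dist_commute)
      finally show ?thesis unfolding A_def by simp
    qed
    show "e n \<le> L" using en by simp
    show "0 \<le> dist (mm n) (\<pi> n)" by simp
    show "dist (mm n) q \<le> dist (mm n) (\<pi> n) + e n" unfolding e_def by (rule dist_triangle)
    show "0 \<le> dist (\<pi> n) w" by simp
    show "L \<le> e n + dist (\<pi> n) w" unfolding L_def e_def by (metis dist_commute dist_triangle)
    show "(dist (\<pi> n) w)\<^sup>2 \<le> (dist (mm n) w)\<^sup>2 - (dist (mm n) (\<pi> n))\<^sup>2"
      unfolding \<pi>_def by (rule geo_proj(3)[OF npc g(1) wG])
    show "0 \<le> dist (mm n) w" by simp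
    show "dist (mm n) w \<le> d n + dist (mm n) q"
    proof -
      have "dist (mm n) w \<le> dist (mm n) (T (mm n)) + dist (T (mm n)) w" by (rule dist_triangle)
      also have "dist (T (mm n)) w \<le> dist (mm n) q" unfolding w_def using ne unfolding nonexpansive_def by blast
      finally show ?thesis unfolding d_def by (simp add: dist_commute)
    qed
  qed
  have l1: "(\<lambda>n. (L - e n)\<^sup>2) \<longlonglongrightarrow> (L - 0)\<^sup>2" by (intro tendsto_intros el)
  have l2: "(\<lambda>n. (d n + e n) * (2 * A + d n + e n)) \<longlonglongrightarrow> (0 + 0) * (2 * A + 0 + 0)"
    by (intro tendsto_intros el dl)
  have "(L - 0)\<^sup>2 \<le> (0 + 0) * (2 * A + 0 + 0)"
    by (rule tendsto_le[OF _ l2 l1]) (use ev bound in \<open>auto elim: eventually_mono\<close>)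
  hence "L\<^sup>2 \<le> 0" by simp
  thus False using L0 by simp
qed

end

theorem mainTheorem1:
  fixes T :: "'a::complete_space \<Rightarrow> 'a" and p q :: 'a
  assumes "NPC_space TYPE('a)"
    and "nonexpansive T"
    and "distance_convex T"
    and "bounded (range (\<lambda>i. (T ^^ i) p))"
  shows "((T q = q \<and> q \<in> closure (geo_co (range (\<lambda>i. (T ^^ i) p))))
            \<longleftrightarrow> (\<lambda>n. mn T (Suc n) p) \<longlonglongrightarrow> q)
       \<and> ((\<lambda>n. mn T (Suc n) p) \<longlonglongrightarrow> q \<longleftrightarrow> weak_limit (\<lambda>n. mn T (Suc n) p) q)
       \<and> (weak_limit (\<lambda>n. mn T (Suc n) p) q \<longleftrightarrow> weak_cluster_point (\<lambda>n. mn T (Suc n) p) q)"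
proof -
  obtain R where R: "\<forall>y\<in>range (\<lambda>i. (T ^^ i) p). dist p y \<le> R"
    using assms(4) bounded_any_center by blast
  interpret setting T p R
    by unfold_locales (use assms R in auto)
  have AB: "(T q = q \<and> q \<in> K) \<longleftrightarrow> mm \<longlonglongrightarrow> q"
    using conv_main strong_to_A by blast
  have BW: "mm \<longlonglongrightarrow> q \<longleftrightarrow> weak_limit mm q"
    using strong_to_weak weak_to_K weak_to_fix conv_main by blast
  have WC: "weak_limit mm q \<longleftrightarrow> weak_cluster_point mm q"
    using strong_to_cluster cluster_to_A conv_main strong_to_weak BW by blast
  show ?thesis using AB BW WC by simp
qed


end
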